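(* $$\sum_{n=1}^\infty \frac{H_n \binom{2n}{n}}{(2n-1)^2\, 2^{2n}} = \pi(1-\log 2) - 4(1-G),$$ where $G$ is Catalan's constant.
   Context: $H_n=\sum_{k=1}^n \frac{1}{k}$ denotes the $n$-th harmonic number and $\binom{2n}{n}$ the central binomial coefficient; $G=\sum_{n=0}^\infty \frac{(-1)^n}{(2n+1)^2}$ is Catalan's constant; $\log$ is the natural logarithm. *)

theory Defs
  imports "HOL-Analysis.Analysis"
begin

definition catalan :: real where
  "catalan = (\<Sum>n. (-1) ^ n / (2 * real n + 1) ^ 2)"

end

theory Submission
  imports Defs
begin


definition ca :: "nat \<Rightarrow> real" where "ca n = real ((2*n) choose n) / 4^n"

lemma ca_nonneg: "0 \<le> ca n" by (simp add: ca_def)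

lemma ca_le1: "ca n \<le> 1"
proof -
  have "real ((2*n) choose n) \<le> 2^(2*n)"
    using binomial_le_pow2[of "2*n" n] by (metis of_nat_le_iff of_nat_numeral of_nat_power)
  also have "(2::real)^(2*n) = 4^n" by (simp add: power_mult)
  finally show ?thesis by (simp add: ca_def)
qed

lemma ca_fact: "ca n = fact (2*n) / (fact n * fact n * 4^n)"
  by (simp add: ca_def binomial_fact)

lemma ca_Suc: "ca (Suc n) = ca n * (2*real n + 1) / (2*real n + 2)"
proof -
  have "2 * Suc n = Suc (Suc (2*n))" by simp
  then have f: "(fact (2 * Suc n)::real) = (2*real n+2)*(2*real n+1) * fact (2*n)"
    by (simp only: fact_Suc) (simp add: algebra_simps)
  have p: "(4::real)^Suc n = 4 * 4^n" by simp
  have q: "(fact (Suc n)::real) = (real n + 1) * fact n" by (simp add: algebra_simps)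
  have "fact n > (0::real)" "(4::real)^n > 0" by auto
  then show ?thesis unfolding ca_fact f p q by (simp add: divide_simps) (simp add: algebra_simps)
qed

lemma ca_gbin: "((-1/2::real) gchoose n) * (-1)^n = ca n"
proof (induction n)
  case 0 then show ?case by (simp add: ca_def)
next
  case (Suc n)
  have r: "((-1/2::real) gchoose Suc n) = ((-1/2) gchoose n) * (-1/2 - real n) / (real n + 1)"
    using gbinomial_mult_1'[of "-1/2::real" n] by (simp add: field_simps)
  show ?case using Suc unfolding r ca_Suc by (simp add: field_simps)
qed

lemma ca_series: assumes "\<bar>x\<bar> < 1" shows "(\<lambda>n. ca n * x^n) sums (1 / sqrt (1 - x))"
proof -
  have "(\<lambda>n. ((-1/2::real) gchoose n) * (-x)^n) sums (1 + (-x)) powr (-1/2)"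
    by (rule gen_binomial_real) (use assms in auto)
  moreover have "((-1/2::real) gchoose n) * (-x)^n = ca n * x^n" for n
    using ca_gbin[of n] by (simp add: power_minus[of x] mult_ac)
  moreover have "(1 + (-x)) powr (-1/2) = 1 / sqrt (1 - x)"
    using assms by (simp add: powr_minus_divide powr_half_sqrt)
  ultimately show ?thesis by simp
qed


lemma series_deriv:
  fixes f f' :: "nat \<Rightarrow> real \<Rightarrow> real"
  assumes d: "\<And>n y. (f n has_field_derivative f' n y) (at y)"
    and b: "\<And>n y. \<bar>y\<bar> < 1 \<Longrightarrow> \<bar>f' n y\<bar> \<le> (y^2)^n"
    and z: "\<And>n. f n 0 = 0" and x: "\<bar>x\<bar> < 1"
  shows "summable (\<lambda>n. f n x)" "((\<lambda>x. \<Sum>n. f n x) has_field_derivative (\<Sum>n. f' n x)) (at x)"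
proof -
  define r where "r = (\<bar>x\<bar> + 1) / 2"
  have r: "\<bar>x\<bar> < r" "r < 1" "0 < r" using x by (auto simp: r_def)
  define S where "S = {-r<..<r}"
  have cS: "convex S" by (simp add: S_def)
  have xS: "x \<in> interior S" using r by (simp add: S_def interior_open abs_less_iff)
  have 0: "0 \<in> S" using r by (simp add: S_def)
  have sm: "summable (\<lambda>n. (r^2)^n)"
    using r by (intro summable_geometric) (simp add: abs_square_less_1)
  have "uniform_limit S (\<lambda>n x. \<Sum>i<n. f' i x) (\<lambda>x. suminf (\<lambda>i. f' i x)) sequentially"
  proof (rule Weierstrass_m_test[OF _ sm])
    fix n y assume "y \<in> S"
    then have y: "\<bar>y\<bar> < r" by (auto simp: S_def)
    have "norm (f' n y) \<le> (y^2)^n" using b[of y n] y r by simp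
    also have "\<dots> \<le> (r^2)^n"
    proof (rule power_mono)
      have "\<bar>y\<bar>^2 \<le> r^2" using y by (intro power_mono) auto
      then show "y^2 \<le> r^2" by simp
    qed simp
    finally show "norm (f' n y) \<le> (r^2)^n" .
  qed
  then have uc: "uniformly_convergent_on S (\<lambda>n x. \<Sum>i<n. f' i x)"
    unfolding uniformly_convergent_on_def by blast
  have s0: "summable (\<lambda>n. f n 0)" by (simp add: z)
  show "summable (\<lambda>n. f n x)" "((\<lambda>x. \<Sum>n. f n x) has_field_derivative (\<Sum>n. f' n x)) (at x)"
    using has_field_derivative_series'[where f=f and f'=f', OF cS has_field_derivative_at_within[OF d] uc 0 s0 xS]
    by auto
qed

lemma deriv_unique:
  fixes F G D :: "real \<Rightarrow> real"
  assumes "\<And>y. \<bar>y\<bar> < 1 \<Longrightarrow> (F has_field_derivative D y) (at y)"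
    "\<And>y. \<bar>y\<bar> < 1 \<Longrightarrow> (G has_field_derivative D y) (at y)"
    "F 0 = G 0" "\<bar>x\<bar> < 1"
  shows "F x = G x"
proof -
  have "\<exists>c. \<forall>y\<in>{-1<..<1}. F y - G y = c"
  proof (rule has_field_derivative_zero_constant)
    fix y :: real assume "y \<in> {-1<..<1}"
    then have "\<bar>y\<bar> < 1" by auto
    from DERIV_diff[OF assms(1)[OF this] assms(2)[OF this]]
    show "((\<lambda>y. F y - G y) has_field_derivative 0) (at y within {-1<..<1})"
      by (auto intro: has_field_derivative_at_within)
  qed simp
  then obtain c where "\<forall>y\<in>{-1<..<1}. F y - G y = c" by blast
  from this[rule_format, of 0] this[rule_format, of x] assms(3,4) show ?thesis by (auto simp: abs_less_iff)
qed

lemma arcsin_series: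
  assumes x: "\<bar>x\<bar> < 1"
  shows "(\<lambda>n. ca n * x^(2*n+1) / (2*n+1)) sums arcsin x"
proof -
  define f where "f n y = ca n * y^(2*n+1) / (2*n+1)" for n and y :: real
  define f' where "f' n y = ca n * (y^2)^n" for n and y :: real
  have d: "(f n has_field_derivative f' n y) (at y)" for n y
  proof -
    have "((\<lambda>y. y^(2*n+1)) has_field_derivative (real (2*n+1) * y^(2*n))) (at y)"
      using DERIV_pow[of "2*n+1" y] by simp
    from DERIV_cdivide[OF DERIV_cmult[OF this, of "ca n"], of "real (2*n+1)"]
    have "(f n has_field_derivative ca n * (real (2*n+1) * y^(2*n)) / real (2*n+1)) (at y)"
      unfolding f_def by simp
    moreover have "ca n * (real (2*n+1) * y^(2*n)) / real (2*n+1) = f' n y"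
      unfolding f'_def by (simp add: power_mult del: of_nat_Suc)
    ultimately show ?thesis by simp
  qed
  have b: "\<bar>f' n y\<bar> \<le> (y^2)^n" if "\<bar>y\<bar> < 1" for n y
    using ca_le1[of n] ca_nonneg[of n] by (simp add: f'_def abs_mult mult_left_le_one_le)
  have z: "f n 0 = 0" for n by (simp add: f_def)
  have D: "((\<lambda>x. \<Sum>n. f n x) has_field_derivative inverse (sqrt (1 - y^2))) (at y)" if "\<bar>y\<bar> < 1" for y
  proof -
    have "(\<lambda>n. f' n y) sums (1 / sqrt (1 - y^2))"
      unfolding f'_def by (rule ca_series) (use that in \<open>simp add: abs_square_less_1\<close>)
    then have "(\<Sum>n. f' n y) = inverse (sqrt (1 - y^2))" by (simp add: sums_iff inverse_eq_divide)
    with series_deriv(2)[OF d b z that] show ?thesis by simp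
  qed
  have "(\<Sum>n. f n x) = arcsin x"
    by (rule deriv_unique[OF D, of arcsin]) (auto intro: DERIV_arcsin simp: z x)
  with series_deriv(1)[OF d b z x] show ?thesis unfolding f_def[symmetric]
    by (simp add: sums_iff)
qed



definition cc :: "nat \<Rightarrow> real" where "cc n = ca (Suc n) / (2*real n+1)^2"

lemma cc_nonneg: "0 \<le> cc n" by (simp add: cc_def ca_nonneg)

lemma inv_sq_summable: "summable (\<lambda>n. 1 / (2*real n+1)^2)"
proof (rule summable_comparison_test')
  show "summable (\<lambda>n. inverse (real (Suc n) ^ 2))"
    using inverse_power_summable[of 2, where 'a=real] by (subst summable_Suc_iff) simp
  fix n :: nat
  have "real (Suc n)^2 \<le> (2*real n+1)^2" by (intro power_mono) auto
  then show "norm (1 / (2*real n+1)^2) \<le> inverse (real (Suc n) ^ 2)"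
    by (simp add: divide_simps del: of_nat_Suc)
qed

lemma cc_summable: "summable cc"
proof (rule summable_comparison_test'[OF inv_sq_summable])
  fix n show "norm (cc n) \<le> 1 / (2*real n+1)^2"
    using ca_le1[of "Suc n"] ca_nonneg[of "Suc n"] by (simp add: cc_def divide_right_mono)
qed

lemma phi_series_open:
  assumes t: "\<bar>t\<bar> < 1"
  shows "(\<lambda>n. cc n * t^(2*n+2)) sums (t * arcsin t + sqrt (1 - t^2) - 1)"
proof -
  define f where "f n y = cc n * y^(2*n+2)" for n and y :: real
  define f' where "f' n y = ca n * y^(2*n+1) / (2*n+1)" for n and y :: real
  have d: "(f n has_field_derivative f' n y) (at y)" for n y
  proof -
    have "((\<lambda>y. y^(2*n+2)) has_field_derivative (real (2*n+2) * y^(2*n+1))) (at y)"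
      using DERIV_pow[of "2*n+2" y] by simp
    from DERIV_cmult[OF this, of "cc n"]
    have D0: "(f n has_field_derivative cc n * (real (2*n+2) * y^(2*n+1))) (at y)"
      unfolding f_def by simp
    define a where "a = 2*real n+1"
    define b where "b = 2*real n+2"
    have ab: "a > 0" "b > 0" by (auto simp: a_def b_def)
    have "cc n = ca n * a / b / a^2" unfolding cc_def ca_Suc a_def b_def by simp
    moreover have "real (2*n+2) = b" by (simp add: b_def)
    ultimately have "cc n * real (2*n+2) = ca n / a" using ab by (simp add: field_simps power2_eq_square)
    then have e: "cc n * real (2*n+2) = ca n / (2*real n+1)" by (simp add: a_def)
    have "cc n * (real (2*n+2) * y^(2*n+1)) = (cc n * real (2*n+2)) * y^(2*n+1)" by simp
    also have "\<dots> = f' n y" unfolding e f'_def by simp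
    finally show ?thesis using D0 by simp
  qed
  have b: "\<bar>f' n y\<bar> \<le> (y^2)^n" if "\<bar>y\<bar> < 1" for n y
  proof -
    have "\<bar>f' n y\<bar> = ca n * \<bar>y\<bar>^(2*n+1) / (2*n+1)"
      using ca_nonneg[of n] by (simp add: f'_def abs_mult power_abs)
    also have "\<dots> \<le> 1 * \<bar>y\<bar>^(2*n+1) / 1"
      by (intro divide_mono mult_right_mono ca_le1) (auto intro!: mult_nonneg_nonneg ca_nonneg)
    also have "\<dots> \<le> \<bar>y\<bar>^(2*n)" using that by (simp add: power_le_one mult_left_le_one_le)
    also have "\<dots> = (y^2)^n" by (simp add: power_mult)
    finally show ?thesis .
  qed
  have z: "f n 0 = 0" for n by (simp add: f_def)
  have D: "((\<lambda>x. \<Sum>n. f n x) has_field_derivative arcsin y) (at y)" if "\<bar>y\<bar> < 1" for y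
  proof -
    have "(\<lambda>n. f' n y) sums arcsin y" unfolding f'_def using arcsin_series[OF that] by simp
    with series_deriv(2)[OF d b z that] show ?thesis by (simp add: sums_iff)
  qed
  have D2: "((\<lambda>t. t * arcsin t + sqrt (1 - t^2) - 1) has_field_derivative arcsin y) (at y)"
    if "\<bar>y\<bar> < 1" for y
  proof -
    have y: "-1 < y" "y < 1" using that by auto
    have p: "0 < 1 - y^2" using that by (simp add: abs_square_less_1)
    have "((\<lambda>t. t * arcsin t + sqrt (1 - t^2) - 1) has_field_derivative
       (1 * arcsin y + y * inverse (sqrt (1 - y^2)) + inverse (sqrt (1 - y^2)) / 2 * (0 - 2 * y) - 0)) (at y)"
      by (intro derivative_intros DERIV_arcsin y DERIV_real_sqrt p) (use y p in \<open>auto intro!: derivative_eq_intros\<close>)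
    then show ?thesis by simp
  qed
  have "(\<Sum>n. f n t) = t * arcsin t + sqrt (1 - t^2) - 1"
    by (rule deriv_unique[OF D D2]) (auto simp: z t)
  with series_deriv(1)[OF d b z t] show ?thesis unfolding f_def[symmetric]
    by (simp add: sums_iff)
qed



lemma extend_to_1:
  fixes F G :: "real \<Rightarrow> real"
  assumes "continuous_on {0..1} F" "continuous_on {0..1} G" "\<And>t. 0 \<le> t \<Longrightarrow> t < 1 \<Longrightarrow> F t = G t"
  shows "F 1 = G 1"
proof -
  have e: "at 1 within {0..1} = at_left (1::real)" by (rule at_within_Icc_at_left) simp
  have "(F \<longlongrightarrow> F 1) (at_left 1)" using assms(1) unfolding continuous_on_def e[symmetric] by auto
  moreover have "(G \<longlongrightarrow> G 1) (at_left 1)" using assms(2) unfolding continuous_on_def e[symmetric] by auto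
  moreover have "eventually (\<lambda>t. F t = G t) (at_left (1::real))"
  proof -
    have "eventually (\<lambda>t. t \<in> {0<..<(1::real)}) (at_left 1)"
      by (intro eventually_at_leftI[of 0]) auto
    then show ?thesis by eventually_elim (use assms(3) in auto)
  qed
  ultimately have "(G \<longlongrightarrow> F 1) (at_left 1)" using tendsto_cong by (metis (mono_tags, lifting))
  with \<open>(G \<longlongrightarrow> G 1) (at_left 1)\<close> show ?thesis
    using tendsto_unique trivial_limit_at_left_real by metis
qed

lemma phi_cont: "continuous_on {-1..1} (\<lambda>t. \<Sum>n. cc n * t^(2*n+2))"
proof (rule uniform_limit_theorem[OF _ Weierstrass_m_test[OF _ cc_summable]])
  show "\<forall>\<^sub>F n in sequentially. continuous_on {-1..1} (\<lambda>t. \<Sum>i<n. cc i * t^(2*i+2))"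
    by (intro always_eventually allI continuous_intros)
  fix n and t :: real assume "t \<in> {-1..1}"
  then have "\<bar>t\<bar> \<le> 1" by auto
  then have "\<bar>t\<bar>^(2*n+2) \<le> 1" by (intro power_le_one) auto
  then have "cc n * \<bar>t\<bar>^(2*n+2) \<le> cc n * 1" using cc_nonneg[of n] by (intro mult_left_mono) auto
  then show "norm (cc n * t^(2*n+2)) \<le> cc n"
    using cc_nonneg[of n] by (simp add: abs_mult power_abs)
qed simp

lemma closed_cont: "continuous_on {-1..1} (\<lambda>t::real. t * arcsin t + sqrt (1 - t^2) - 1)"
  by (intro continuous_intros) auto

lemma phi_series:
  assumes t: "0 \<le> t" "t \<le> 1"
  shows "(\<lambda>n. cc n * t^(2*n+2)) sums (t * arcsin t + sqrt (1 - t^2) - 1)"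
proof -
  have sm: "summable (\<lambda>n. cc n * t^(2*n+2))"
  proof (rule summable_comparison_test'[OF cc_summable])
    fix n
    have "\<bar>t\<bar>^(2*n+2) \<le> 1" using t by (intro power_le_one) auto
    then have "cc n * \<bar>t\<bar>^(2*n+2) \<le> cc n * 1" using cc_nonneg[of n] by (intro mult_left_mono) auto
    then show "norm (cc n * t^(2*n+2)) \<le> cc n"
      using cc_nonneg[of n] by (simp add: abs_mult power_abs)
  qed
  have "(\<Sum>n. cc n * t^(2*n+2)) = t * arcsin t + sqrt (1 - t^2) - 1"
  proof (cases "t < 1")
    case True
    then show ?thesis using phi_series_open[of t] t by (simp add: sums_iff)
  next
    case False
    then have t1: "t = 1" using t by simp
    have "(\<lambda>t. \<Sum>n. cc n * t^(2*n+2)) 1 = (\<lambda>t::real. t * arcsin t + sqrt (1 - t^2) - 1) 1"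
      by (rule extend_to_1[OF continuous_on_subset[OF phi_cont] continuous_on_subset[OF closed_cont]])
         (use phi_series_open in \<open>auto simp: sums_iff\<close>)
    then show ?thesis using t1 by simp
  qed
  with sm show ?thesis by (simp add: sums_iff)
qed

definition ti2 :: "real \<Rightarrow> real" where
  "ti2 x = (\<Sum>n. (-1)^n * x^(2*n+1) / (2*real n+1)^2)"

lemma ti2_cont: "continuous_on {-1..1} ti2"
  unfolding ti2_def
proof (rule uniform_limit_theorem[OF _ Weierstrass_m_test[OF _ inv_sq_summable]])
  show "\<forall>\<^sub>F n in sequentially. continuous_on {-1..1} (\<lambda>t. \<Sum>i<n. (-1)^i * t^(2*i+1) / (2*real i+1)^2)"
    by (intro always_eventually allI continuous_intros) auto
  fix n and t :: real assume "t \<in> {-1..1}"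
  then have "\<bar>t\<bar> \<le> 1" by auto
  then have "\<bar>t\<bar>^(2*n+1) \<le> 1" by (intro power_le_one) auto
  then have "\<bar>t\<bar>^(2*n+1) / (2*real n+1)^2 \<le> 1 / (2*real n+1)^2" by (intro divide_right_mono) auto
  then show "norm ((-1)^n * t^(2*n+1) / (2*real n+1)^2) \<le> 1 / (2*real n+1)^2"
    by (simp add: abs_mult power_abs)
qed simp

lemma ti2_0: "ti2 0 = 0" by (simp add: ti2_def)
lemma ti2_1: "ti2 1 = catalan" by (simp add: ti2_def catalan_def)

lemma ti2_deriv:
  assumes x: "0 < x" "x < 1"
  shows "(ti2 has_real_derivative arctan x / x) (at x)"
proof -
  define f where "f n y = (-1)^n * y^(2*n+1) / (2*real n+1)^2" for n and y :: real
  define f' where "f' n y = (-1)^n * y^(2*n) / (2*real n+1)" for n and y :: real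
  have d: "(f n has_field_derivative f' n y) (at y)" for n y
  proof -
    have "((\<lambda>y. y^(2*n+1)) has_field_derivative (real (2*n+1) * y^(2*n))) (at y)"
      using DERIV_pow[of "2*n+1" y] by simp
    from DERIV_cdivide[OF DERIV_cmult[OF this, of "(-1)^n"], of "(2*real n+1)^2"]
    have D0: "(f n has_field_derivative (-1)^n * (real (2*n+1) * y^(2*n)) / (2*real n+1)^2) (at y)"
      unfolding f_def by simp
    define a where "a = 2*real n+1"
    have a: "a > 0" by (simp add: a_def)
    have "real (2*n+1) = a" by (simp add: a_def)
    then have "(-1)^n * (real (2*n+1) * y^(2*n)) / (2*real n+1)^2 = (-1)^n * (a * y^(2*n)) / a^2"
      by (simp add: a_def)
    also have "\<dots> = (-1)^n * y^(2*n) / a" using a by (simp add: power2_eq_square)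
    finally have "(-1)^n * (real (2*n+1) * y^(2*n)) / (2*real n+1)^2 = f' n y"
      unfolding f'_def a_def .
    with D0 show ?thesis by simp
  qed
  have b: "\<bar>f' n y\<bar> \<le> (y^2)^n" if "\<bar>y\<bar> < 1" for n y
  proof -
    have "\<bar>f' n y\<bar> = y^(2*n) / (2*real n+1)" by (simp add: f'_def abs_mult power_abs power_mult)
    also have "\<dots> \<le> y^(2*n) / 1" by (intro divide_left_mono) (auto simp: power_mult)
    finally show ?thesis by (simp add: power_mult)
  qed
  have z: "f n 0 = 0" for n by (simp add: f_def)
  have x1: "\<bar>x\<bar> < 1" using x by auto
  have sm: "summable (\<lambda>n. f' n x)"
  proof (rule summable_comparison_test')
    show "summable (\<lambda>n. (x^2)^n)" using x1 by (intro summable_geometric) (simp add: abs_square_less_1)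
    fix n show "norm (f' n x) \<le> (x^2)^n" using b[OF x1] by simp
  qed
  have "(\<Sum>n. f' n x) * x = (\<Sum>n. f' n x * x)" using sm by (rule suminf_mult2)
  also have "\<dots> = (\<Sum>k. (-1)^k * (1 / real (k * 2 + 1) * x ^ (k * 2 + 1)))"
    by (intro suminf_cong) (simp add: f'_def mult_ac power_Suc)
  also have "\<dots> = arctan x" using arctan_series[of x] x by simp
  finally have "(\<Sum>n. f' n x) = arctan x / x" using x by (simp add: field_simps)
  moreover have "ti2 = (\<lambda>x. \<Sum>n. f n x)" by (simp add: ti2_def f_def fun_eq_iff)
  ultimately show ?thesis using series_deriv(2)[OF d b z x1] by simp
qed



lemma catalan_integral: "((\<lambda>\<theta>. (pi - 2*\<theta>) / cos \<theta>) has_integral (4 * catalan)) {0..pi/2}"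
proof -
  define F where "F \<theta> = -4 * ti2 (tan (pi/4 - \<theta>/2))" for \<theta> :: real
  have tanr: "tan (pi/4 - \<theta>/2) \<in> {-1..1}" if "\<theta> \<in> {0..pi/2}" for \<theta>
  proof -
    have t0: "0 \<le> \<theta>" "\<theta> \<le> pi/2" using that by auto
    have "tan 0 \<le> tan (pi/4 - \<theta>/2)" using t0 pi_gt_zero by (intro tan_mono_le) linarith+
    moreover have "tan (pi/4 - \<theta>/2) \<le> tan (pi/4)" using t0 pi_gt_zero by (intro tan_mono_le) linarith+
    ultimately show ?thesis by (simp add: tan_45)
  qed
have ct: "continuous_on {0..pi/2} (\<lambda>\<theta>. tan (pi/4 - \<theta>/2))"
  proof (rule Transcendental.continuous_on_tan)
    show "continuous_on {0..pi/2} (\<lambda>\<theta>::real. pi/4 - \<theta>/2)" by (intro continuous_intros) auto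
    show "\<forall>\<theta>\<in>{0..pi/2}. cos (pi/4 - \<theta>/2) \<noteq> 0"
    proof
      fix \<theta> :: real assume "\<theta> \<in> {0..pi/2}"
      then have t0: "0 \<le> \<theta>" "\<theta> \<le> pi/2" by auto
      have "cos (pi/4 - \<theta>/2) > 0" by (intro cos_gt_zero_pi) (use t0 pi_gt_zero in linarith)+
      then show "cos (pi/4 - \<theta>/2) \<noteq> 0" by simp
    qed
  qed
  have "continuous_on {0..pi/2} (\<lambda>\<theta>. ti2 (tan (pi/4 - \<theta>/2)))"
    by (rule continuous_on_compose2[OF ti2_cont ct]) (use tanr in blast)
  then have cont: "continuous_on {0..pi/2} F" unfolding F_def by (intro continuous_intros)
  have der: "(F has_vector_derivative (pi - 2*\<theta>) / cos \<theta>) (at \<theta>)" if th: "\<theta> \<in> {0<..<pi/2}" for \<theta>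
  proof -
    define u where "u = pi/4 - \<theta>/2"
    have u: "0 < u" "u < pi/4" using th by (auto simp: u_def)
    have cu: "cos u > 0" using u by (intro cos_gt_zero_pi) auto
    have su: "sin u > 0" using u by (intro sin_gt_zero) auto
    define x where "x = tan u"
    have x: "0 < x" "x < 1"
    proof -
      show "0 < x" using u by (simp add: x_def tan_gt_zero)
      have "tan u < tan (pi/4)" using u by (intro tan_monotone) auto
      then show "x < 1" by (simp add: x_def tan_45)
    qed
    have d1: "((\<lambda>\<theta>. pi/4 - \<theta>/2) has_real_derivative (-1/2)) (at \<theta>)"
      by (auto intro!: derivative_eq_intros)
    have d2: "(tan has_real_derivative inverse ((cos u)^2)) (at (pi/4 - \<theta>/2))"
      using cu unfolding u_def by simp
    have d3: "(ti2 has_real_derivative arctan x / x) (at (tan (pi/4 - \<theta>/2)))"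
      using ti2_deriv[OF x] by (simp add: x_def u_def)
    have "((\<lambda>\<theta>. ti2 (tan (pi/4 - \<theta>/2))) has_real_derivative
            arctan x / x * (inverse ((cos u)^2) * (-1/2))) (at \<theta>)"
      using DERIV_chain2[OF d3 DERIV_chain2[OF d2 d1]] by simp
    then have "(F has_real_derivative -4 * (arctan x / x * (inverse ((cos u)^2) * (-1/2)))) (at \<theta>)"
      unfolding F_def by (rule DERIV_cmult)
    moreover have "-4 * (arctan x / x * (inverse ((cos u)^2) * (-1/2))) = (pi - 2*\<theta>) / cos \<theta>"
    proof -
      have ax: "arctan x = u" unfolding x_def using u by (intro arctan_tan) auto
      have th2: "\<theta> = pi/2 - 2*u" by (simp add: u_def)
      have ct: "cos \<theta> = 2 * sin u * cos u" unfolding th2 by (simp add: cos_diff sin_double)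
      have "pi - 2*\<theta> = 4*u" unfolding th2 by simp
      then show ?thesis unfolding ax unfolding ct x_def tan_def using cu su
        by (simp add: field_simps power2_eq_square)
    qed
    ultimately show ?thesis by (simp add: has_real_derivative_iff_has_vector_derivative)
  qed
  have "((\<lambda>\<theta>. (pi - 2*\<theta>) / cos \<theta>) has_integral (F (pi/2) - F 0)) {0..pi/2}"
    by (rule fundamental_theorem_of_calculus_interior_strong[of "{}"]) (use der cont in auto)
  moreover have "F (pi/2) - F 0 = 4 * catalan"
    by (simp add: F_def tan_45 ti2_0 ti2_1)
  ultimately show ?thesis by simp
qed



lemma alg_id:
  fixes s c t :: real
  assumes "c > 0" "1 + s > 0" "s^2 + c^2 = 1"
  shows "2 * (s / c) * (pi/2 - t * s - c) = -pi * c / (1 + s) - 2 * s + 2 * t * c + (pi - 2 * t) / c"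
proof -
  have c2: "c * c = 1 - s * s" using assms(3) by (simp add: power2_eq_square)
  have pos: "c * (1 + s) > 0" using assms(1,2) by simp
  have nz: "c \<noteq> 0" "1 + s \<noteq> 0" "c + c * s \<noteq> 0" "c * (1 + s) \<noteq> 0" "(1 + s) * c \<noteq> 0"
    using assms(1,2) pos by (auto simp: algebra_simps)
  show ?thesis using nz c2 by (simp add: field_simps) algebra
qed

lemma g_integral:
  "((\<lambda>\<theta>. 2 * tan \<theta> * (pi/2 - \<theta> * sin \<theta> - cos \<theta>)) has_integral (pi * (1 - ln 2) - 4 * (1 - catalan))) {0..pi/2}"
proof -
  define E where "E \<theta> = -pi * ln (1 + sin \<theta>) + 4 * cos \<theta> + 2 * \<theta> * sin \<theta>" for \<theta> :: real
  define E' where "E' \<theta> = -pi * cos \<theta> / (1 + sin \<theta>) - 2 * sin \<theta> + 2 * \<theta> * cos \<theta>" for \<theta> :: real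
  have sp: "1 + sin \<theta> > 0" if "\<theta> \<in> {0..pi/2}" for \<theta>
  proof -
    have "0 \<le> sin \<theta>" using that pi_gt_zero by (intro sin_ge_zero) auto
    then show ?thesis by simp
  qed
  have der: "(E has_vector_derivative E' \<theta>) (at \<theta>)" if th: "\<theta> \<in> {0<..<pi/2}" for \<theta>
  proof -
    have p: "1 + sin \<theta> > 0" using sp th by auto
    have "(E has_real_derivative
       (-pi * (cos \<theta> / (1 + sin \<theta>)) + 4 * (- sin \<theta>) + (2 * sin \<theta> + 2 * \<theta> * cos \<theta>))) (at \<theta>)"
      unfolding E_def using p by (auto intro!: derivative_eq_intros simp: field_simps)
    moreover have "-pi * (cos \<theta> / (1 + sin \<theta>)) + 4 * (- sin \<theta>) + (2 * sin \<theta> + 2 * \<theta> * cos \<theta>) = E' \<theta>"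
      by (simp add: E'_def)
    ultimately show ?thesis by (simp add: has_real_derivative_iff_has_vector_derivative)
  qed
  have cont: "continuous_on {0..pi/2} E"
    unfolding E_def using sp by (intro continuous_intros) (auto simp: order.strict_implies_not_eq[symmetric])
  have I1: "(E' has_integral (E (pi/2) - E 0)) {0..pi/2}"
    by (rule fundamental_theorem_of_calculus_interior_strong[of "{}"]) (use der cont in auto)
  have I: "((\<lambda>\<theta>. E' \<theta> + (pi - 2*\<theta>) / cos \<theta>) has_integral (E (pi/2) - E 0 + 4 * catalan)) {0..pi/2}"
    by (rule has_integral_add[OF I1 catalan_integral])
  have val: "E (pi/2) - E 0 + 4 * catalan = pi * (1 - ln 2) - 4 * (1 - catalan)"
    by (simp add: E_def algebra_simps)
  show ?thesis
  proof (rule has_integral_spike_finite[of "{pi/2}", OF _ _ I[unfolded val]])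
    fix \<theta> assume "\<theta> \<in> {0..pi/2} - {pi/2}"
    then have th: "0 \<le> \<theta>" "\<theta> < pi/2" by auto
    have c: "cos \<theta> > 0" using th pi_gt_zero by (intro cos_gt_zero_pi) linarith+
    have s: "1 + sin \<theta> > 0" using sp th by auto
    show "2 * tan \<theta> * (pi/2 - \<theta> * sin \<theta> - cos \<theta>) = E' \<theta> + (pi - 2*\<theta>) / cos \<theta>"
      unfolding E'_def tan_def by (rule alg_id[OF c s sin_cos_squared_add])
  qed simp
qed

lemma tan_sum_id:
  fixes \<theta> :: real
  shows "2 * tan \<theta> * (1 - sin \<theta>^(2*n)) = (\<Sum>j<n. 2 * sin \<theta>^(2*j+1) * cos \<theta>)"
proof (cases "cos \<theta> = 0")
  case True then show ?thesis by (simp add: tan_def)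
next
  case False
  show ?thesis
  proof (induction n)
    case 0 then show ?case by simp
  next
    case (Suc n)
    have e: "sin \<theta>^(2*Suc n) = sin \<theta>^(2*n) * sin \<theta>^2" by (simp add: power_add[symmetric])
    have "2 * tan \<theta> * (1 - sin \<theta>^(2*Suc n)) = 2 * tan \<theta> * (1 - sin \<theta>^(2*n)) + 2 * tan \<theta> * sin \<theta>^(2*n) * (1 - sin \<theta>^2)"
      unfolding e by (simp add: algebra_simps)
    also have "2 * tan \<theta> * sin \<theta>^(2*n) * (1 - sin \<theta>^2) = 2 * sin \<theta>^(2*n+1) * cos \<theta>"
    proof -
      have a: "1 - sin \<theta>^2 = cos \<theta>^2" by (simp add: cos_squared_eq)
      have b: "tan \<theta> * cos \<theta>^2 = sin \<theta> * cos \<theta>" using False by (simp add: tan_def power2_eq_square)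
      have "2 * tan \<theta> * sin \<theta>^(2*n) * (1 - sin \<theta>^2) = 2 * sin \<theta>^(2*n) * (tan \<theta> * cos \<theta>^2)"
        unfolding a by (simp add: mult_ac)
      also have "\<dots> = 2 * sin \<theta>^(2*n+1) * cos \<theta>" unfolding b by (simp add: mult_ac)
      finally show ?thesis .
    qed
    finally show ?case using Suc by simp
  qed
qed

lemma harm_integral:
  "((\<lambda>\<theta>. 2 * tan \<theta> * (1 - sin \<theta>^(2*n))) has_integral harm n) {0..pi/2}"
proof -
  define P where "P \<theta> = (\<Sum>j<n. sin \<theta>^(2*j+2) / (real j + 1))" for \<theta> :: real
  have dj: "((\<lambda>\<theta>. sin \<theta>^(2*j+2) / (real j + 1)) has_real_derivative 2 * sin \<theta>^(2*j+1) * cos \<theta>) (at \<theta>)" for j \<theta>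
  proof -
    define b where "b = real j + 1"
    have b: "b > 0" by (simp add: b_def)
    have e: "real (2*j+2) = 2 * b" by (simp add: b_def)
    have "((\<lambda>\<theta>. sin \<theta>^(2*j+2)) has_real_derivative real (2*j+2) * sin \<theta>^(2*j+2-1) * cos \<theta>) (at \<theta>)"
      using DERIV_chain2[OF DERIV_pow DERIV_sin, of "2*j+2" \<theta>] by (simp add: mult_ac)
    then have "((\<lambda>\<theta>. sin \<theta>^(2*j+2)) has_real_derivative 2 * b * sin \<theta>^(2*j+1) * cos \<theta>) (at \<theta>)"
      unfolding e by simp
    from DERIV_cdivide[OF this, of b]
    have "((\<lambda>\<theta>. sin \<theta>^(2*j+2) / b) has_real_derivative 2 * b * sin \<theta>^(2*j+1) * cos \<theta> / b) (at \<theta>)" .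
    moreover have "2 * b * sin \<theta>^(2*j+1) * cos \<theta> / b = 2 * sin \<theta>^(2*j+1) * cos \<theta>" using b by simp
    ultimately show ?thesis by (simp add: b_def)
  qed
  have der: "(P has_vector_derivative 2 * tan \<theta> * (1 - sin \<theta>^(2*n))) (at \<theta>)" for \<theta>
    unfolding tan_sum_id P_def has_real_derivative_iff_has_vector_derivative[symmetric]
    by (rule DERIV_sum) (rule dj)
  have cont: "continuous_on {0..pi/2} P" unfolding P_def by (intro continuous_intros) auto
  have "((\<lambda>\<theta>. 2 * tan \<theta> * (1 - sin \<theta>^(2*n))) has_integral (P (pi/2) - P 0)) {0..pi/2}"
    by (rule fundamental_theorem_of_calculus_interior_strong[of "{}"]) (use der cont in auto)
  moreover have "P (pi/2) - P 0 = harm n"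
    by (simp add: P_def harm_altdef inverse_eq_divide add.commute)
  ultimately show ?thesis by simp
qed



lemma term_eq:
  "harm (Suc n) * real ((2 * Suc n) choose (Suc n)) / ((2 * real (Suc n) - 1) ^ 2 * 2 ^ (2 * Suc n))
   = cc n * harm (Suc n)"
proof -
  have "(2::real) ^ (2 * Suc n) = 4 ^ Suc n" by (simp only: power_mult) simp
  moreover have "2 * real (Suc n) - 1 = 2 * real n + 1" by simp
  moreover have "2 * real n + 1 \<noteq> 0" "1 + 2 * real n \<noteq> 0" by linarith+
  ultimately show ?thesis by (simp add: cc_def ca_def field_simps)
qed

theorem mainTheorem8:
  shows "(\<lambda>n. harm (Suc n) * real ((2 * Suc n) choose (Suc n))
            / ((2 * real (Suc n) - 1) ^ 2 * 2 ^ (2 * Suc n)))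
         sums (pi * (1 - ln 2) - 4 * (1 - catalan))"
proof -
  define V where "V = pi * (1 - ln 2) - 4 * (1 - catalan)"
  define h where "h n \<theta> = cc n * (2 * tan \<theta> * (1 - sin \<theta>^(2 * Suc n)))" for n and \<theta> :: real
  define f where "f k \<theta> = (\<Sum>n<k. h n \<theta>)" for k and \<theta> :: real
  define g where "g \<theta> = 2 * tan \<theta> * (pi/2 - \<theta> * sin \<theta> - cos \<theta>)" for \<theta> :: real
  have hint: "(h n has_integral cc n * harm (Suc n)) {0..pi/2}" for n
    unfolding h_def by (rule has_integral_mult_right[OF harm_integral])
  have fint: "(f k has_integral (\<Sum>n<k. cc n * harm (Suc n))) {0..pi/2}" for k
    unfolding f_def by (rule has_integral_sum) (auto intro: hint)
  have gint: "(g has_integral V) {0..pi/2}" unfolding g_def V_def by (rule g_integral)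
  have hnn: "0 \<le> h n \<theta>" if "\<theta> \<in> {0..pi/2}" for n \<theta>
  proof -
    from that have t: "0 \<le> \<theta>" "\<theta> \<le> pi/2" by auto
    have s0: "0 \<le> sin \<theta>" using t pi_gt_zero by (intro sin_ge_zero) linarith+
    have s1: "sin \<theta> \<le> 1" by simp
    have c0: "0 \<le> cos \<theta>" using t pi_gt_zero by (intro cos_ge_zero) linarith+
    have "0 \<le> tan \<theta>" unfolding tan_def using s0 c0 by simp
    moreover have "sin \<theta>^(2 * Suc n) \<le> 1" using s0 s1 by (intro power_le_one)
    ultimately show ?thesis unfolding h_def using cc_nonneg[of n] by simp
  qed
  have hsums: "(\<lambda>n. h n \<theta>) sums g \<theta>" if "\<theta> \<in> {0..pi/2}" for \<theta>
  proof -
    from that have t: "0 \<le> \<theta>" "\<theta> \<le> pi/2" by auto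
    have s0: "0 \<le> sin \<theta>" using t pi_gt_zero by (intro sin_ge_zero) linarith+
    have c0: "0 \<le> cos \<theta>" using t pi_gt_zero by (intro cos_ge_zero) linarith+
    have A: "cc sums (pi/2 - 1)" using phi_series[of 1] by simp
    have B: "(\<lambda>n. cc n * sin \<theta>^(2*n+2)) sums (\<theta> * sin \<theta> + cos \<theta> - 1)"
    proof -
      have "(\<lambda>n. cc n * sin \<theta>^(2*n+2)) sums (sin \<theta> * arcsin (sin \<theta>) + sqrt (1 - (sin \<theta>)^2) - 1)"
        using phi_series[of "sin \<theta>"] s0 by simp
      moreover have "arcsin (sin \<theta>) = \<theta>" using t pi_gt_zero by (intro arcsin_sin) linarith+
      moreover have "sqrt (1 - (sin \<theta>)^2) = cos \<theta>" using c0 by (simp add: cos_squared_eq[symmetric])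
      ultimately show ?thesis by (simp add: mult.commute)
    qed
    have "(\<lambda>n. 2 * tan \<theta> * (cc n - cc n * sin \<theta>^(2*n+2))) sums (2 * tan \<theta> * ((pi/2 - 1) - (\<theta> * sin \<theta> + cos \<theta> - 1)))"
      by (intro sums_mult sums_diff A B)
    moreover have "2 * tan \<theta> * (cc n - cc n * sin \<theta>^(2*n+2)) = h n \<theta>" for n
      by (simp add: h_def algebra_simps)
    moreover have "2 * tan \<theta> * ((pi/2 - 1) - (\<theta> * sin \<theta> + cos \<theta> - 1)) = g \<theta>"
      by (simp add: g_def algebra_simps)
    ultimately show ?thesis by simp
  qed
  have fle: "f k \<theta> \<le> g \<theta>" if "\<theta> \<in> {0..pi/2}" for k \<theta>
  proof -
    have "f k \<theta> \<le> (\<Sum>n. h n \<theta>)" unfolding f_def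
      by (rule sum_le_suminf) (use hsums[OF that] hnn[OF that] in \<open>auto simp: sums_iff\<close>)
    then show ?thesis using hsums[OF that] by (simp add: sums_iff)
  qed
  have mct: "g integrable_on {0..pi/2} \<and> ((\<lambda>k. integral {0..pi/2} (f k)) \<longlongrightarrow> integral {0..pi/2} g) sequentially"
  proof (rule monotone_convergence_increasing)
    show "f k integrable_on {0..pi/2}" for k using fint by blast
    show "f k \<theta> \<le> f (Suc k) \<theta>" if "\<theta> \<in> {0..pi/2}" for k \<theta>
      using hnn[OF that, of k] by (simp add: f_def)
    show "(\<lambda>k. f k \<theta>) \<longlonglongrightarrow> g \<theta>" if "\<theta> \<in> {0..pi/2}" for \<theta>
      using hsums[OF that] by (simp add: f_def sums_def)
    show "bounded (range (\<lambda>k. integral {0..pi/2} (f k)))"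
    proof (rule boundedI)
      fix y assume "y \<in> range (\<lambda>k. integral {0..pi/2} (f k))"
      then obtain k where y: "y = integral {0..pi/2} (f k)" by blast
      have "0 \<le> integral {0..pi/2} (f k)"
        using fint by (intro integral_nonneg) (auto simp: f_def intro!: sum_nonneg hnn)
      moreover have "integral {0..pi/2} (f k) \<le> integral {0..pi/2} g"
        using fint gint fle by (intro integral_le) auto
      ultimately show "norm y \<le> integral {0..pi/2} g" using y by simp
    qed
  qed
  have "(\<lambda>k. \<Sum>n<k. cc n * harm (Suc n)) \<longlonglongrightarrow> V"
  proof -
    have "integral {0..pi/2} (f k) = (\<Sum>n<k. cc n * harm (Suc n))" for k using fint by (rule integral_unique)
    moreover have "integral {0..pi/2} g = V" using gint by (rule integral_unique)
    ultimately show ?thesis using mct by simp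
  qed
  then have "(\<lambda>n. cc n * harm (Suc n)) sums V" by (simp add: sums_def)
  then show ?thesis unfolding term_eq V_def .
qed

end
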